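(* Let $S$ be a finite pseudo-nilpotent semigroup. If $I$ is an ideal of $S$ such that both $I$ and the Rees factor semigroup $S/I$ are nilpotent, then $S$ is nilpotent.
   Context: For a semigroup $S$, $S^1$ denotes $S$ with an identity adjoined (if $S$ has none). For $x,y\in S$ and $z_1,z_2,\ldots\in S^1$ define recursively $\lambda_0=x$, $\rho_0=y$, $\lambda_{n+1}=\lambda_n z_{n+1}\rho_n$, $\rho_{n+1}=\rho_n z_{n+1}\lambda_n$; write $\lambda_n(x,y,z_1,\ldots,z_n)$ and $\rho_n(x,y,z_1,\ldots,z_n)$. A semigroup $S$ is nilpotent (in the sense of Mal'cev) if there is a positive integer $n$ with $\lambda_n(a,b,c_1,\ldots,c_n)=\rho_n(a,b,c_1,\ldots,c_n)$ for all $a,b\in S$ and $c_1,\ldots,c_n\in S^1$. $\langle X\rangle$ denotes the subsemigroup generated by $X$. The upper non-nilpotent graph $\mathcal{N}_S$ has vertex set $S$, with an edge between $x$ and $y$ iff $\langle x,y\rangle$ is not nilpotent. The empty set is regarded as an ideal; for an ideal $I$ of $S$, $S/I$ is the Rees factor semigroup, with $S/\emptyset=S$. A semigroup $S$ is pseudo-nilpotent if the following holds: whenever $x,y\in S$, $w_1,\ldots,w_m\in S^1$, $T$ is the subsemigroup generated by $x,y$ and those $w_i$ lying in $S$, $I$ is an ideal (possibly empty) of $T$, and $t<m$ are non-negative integers such that, writing $\lambda_k=\lambda_k(x,y,w_1,\ldots,w_k)$ and $\rho_k=\rho_k(x,y,w_1,\ldots,w_k)$, one has $\lambda_t\neq\rho_t$,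 $(\lambda_t,\rho_t)=(\lambda_m,\rho_m)$ and $\lambda_m,\rho_m\notin I$, then for every $0\le i\le m$ there is an edge in $\mathcal{N}_{T/I}$ between (the images of) $\lambda_i$ and $\rho_i$. *)

theory Defs
  imports Main
begin

definition sg :: "'a set \<Rightarrow> ('a \<Rightarrow> 'a \<Rightarrow> 'a) \<Rightarrow> bool" where
  "sg S f \<longleftrightarrow> (\<forall>x\<in>S. \<forall>y\<in>S. f x y \<in> S) \<and>
     (\<forall>x\<in>S. \<forall>y\<in>S. \<forall>z\<in>S. f (f x y) z = f x (f y z))"

text \<open>Elements of S^1 are represented as 'a option; None is the adjoined identity.\<close>

definition in_S1 :: "'a set \<Rightarrow> 'a option \<Rightarrow> bool" where
  "in_S1 S z \<longleftrightarrow> set_option z \<subseteq> S"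

fun mul3 :: "('a \<Rightarrow> 'a \<Rightarrow> 'a) \<Rightarrow> 'a \<Rightarrow> 'a option \<Rightarrow> 'a \<Rightarrow> 'a" where
  "mul3 f x None y = f x y"
| "mul3 f x (Some z) y = f (f x z) y"

fun lam_rho :: "('a \<Rightarrow> 'a \<Rightarrow> 'a) \<Rightarrow> 'a \<Rightarrow> 'a \<Rightarrow> (nat \<Rightarrow> 'a option) \<Rightarrow> nat \<Rightarrow> 'a \<times> 'a" where
  "lam_rho f x y z 0 = (x, y)"
| "lam_rho f x y z (Suc n) =
     (let (l, r) = lam_rho f x y z n in (mul3 f l (z (Suc n)) r, mul3 f r (z (Suc n)) l))"

definition lam :: "('a \<Rightarrow> 'a \<Rightarrow> 'a) \<Rightarrow> 'a \<Rightarrow> 'a \<Rightarrow> (nat \<Rightarrow> 'a option) \<Rightarrow> nat \<Rightarrow> 'a" where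
  "lam f x y z n = fst (lam_rho f x y z n)"

definition rho :: "('a \<Rightarrow> 'a \<Rightarrow> 'a) \<Rightarrow> 'a \<Rightarrow> 'a \<Rightarrow> (nat \<Rightarrow> 'a option) \<Rightarrow> nat \<Rightarrow> 'a" where
  "rho f x y z n = snd (lam_rho f x y z n)"

definition malcev_nilpotent :: "'a set \<Rightarrow> ('a \<Rightarrow> 'a \<Rightarrow> 'a) \<Rightarrow> bool" where
  "malcev_nilpotent S f \<longleftrightarrow> (\<exists>n>0. \<forall>a\<in>S. \<forall>b\<in>S. \<forall>c.
      (\<forall>i\<in>{1..n}. in_S1 S (c i)) \<longrightarrow> lam f a b c n = rho f a b c n)"

inductive_set gen :: "('a \<Rightarrow> 'a \<Rightarrow> 'a) \<Rightarrow> 'a set \<Rightarrow> 'a set" for f X where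
  base: "x \<in> X \<Longrightarrow> x \<in> gen f X"
| mult: "a \<in> gen f X \<Longrightarrow> b \<in> gen f X \<Longrightarrow> f a b \<in> gen f X"

text \<open>Two-sided ideals (the empty set is allowed).\<close>

definition sg_ideal :: "'a set \<Rightarrow> ('a \<Rightarrow> 'a \<Rightarrow> 'a) \<Rightarrow> 'a set \<Rightarrow> bool" where
  "sg_ideal S f I \<longleftrightarrow> I \<subseteq> S \<and> (\<forall>x\<in>S. \<forall>i\<in>I. f x i \<in> I \<and> f i x \<in> I)"

text \<open>Rees factor semigroup S/I on 'a option: None is the zero (the class I),
Some x stands for x in S - I. For I empty, S/I is (a copy of) S.\<close>

definition rees_carrier :: "'a set \<Rightarrow> 'a set \<Rightarrow> 'a option set" where
  "rees_carrier S I = (if I = {} then Some ` S else insert None (Some ` (S - I)))"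

fun rees_mult :: "('a \<Rightarrow> 'a \<Rightarrow> 'a) \<Rightarrow> 'a set \<Rightarrow> 'a option \<Rightarrow> 'a option \<Rightarrow> 'a option" where
  "rees_mult f I (Some a) (Some b) = (if f a b \<in> I then None else Some (f a b))"
| "rees_mult f I _ _ = None"

definition rees_img :: "'a set \<Rightarrow> 'a \<Rightarrow> 'a option" where
  "rees_img I x = (if x \<in> I then None else Some x)"

definition nn_edge :: "('a \<Rightarrow> 'a \<Rightarrow> 'a) \<Rightarrow> 'a \<Rightarrow> 'a \<Rightarrow> bool" where
  "nn_edge f x y \<longleftrightarrow> \<not> malcev_nilpotent (gen f {x, y}) f"

definition pseudo_nilpotent :: "'a set \<Rightarrow> ('a \<Rightarrow> 'a \<Rightarrow> 'a) \<Rightarrow> bool" where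
  "pseudo_nilpotent S f \<longleftrightarrow>
    (\<forall>x\<in>S. \<forall>y\<in>S. \<forall>m. \<forall>w. (\<forall>i\<in>{1..m}. in_S1 S (w i)) \<longrightarrow>
      (let T = gen f ({x, y} \<union> (\<Union>i\<in>{1..m}. set_option (w i))) in
       \<forall>I. sg_ideal T f I \<longrightarrow>
       (\<forall>t. t < m \<longrightarrow>
          lam f x y w t \<noteq> rho f x y w t \<longrightarrow>
          (lam f x y w t, rho f x y w t) = (lam f x y w m, rho f x y w m) \<longrightarrow>
          lam f x y w m \<notin> I \<longrightarrow> rho f x y w m \<notin> I \<longrightarrow>
          (\<forall>i\<le>m. nn_edge (rees_mult f I)
                     (rees_img I (lam f x y w i)) (rees_img I (rho f x y w i))))))"

end

theory Submission
  imports Defs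
begin

lemma lr_shift:
  "lam_rho f x y w (k+j) =
   lam_rho f (fst (lam_rho f x y w k)) (snd (lam_rho f x y w k)) (\<lambda>i. w (k+i)) j"
proof (induction j)
  case 0 then show ?case by simp
next
  case (Suc j)
  show ?case using Suc by (simp add: split_beta)
qed

lemma lr_cong:
  "\<forall>i\<in>{1..n}. w i = w' i \<Longrightarrow> lam_rho f x y w n = lam_rho f x y w' n"
  by (induction n) (auto simp: split_beta)

lemma lr_eq: "fst (lam_rho f x x w n) = snd (lam_rho f x x w n)"
  by (induction n) (auto simp: split_beta)

lemma mul3_in: "sg S f \<Longrightarrow> l \<in> S \<Longrightarrow> r \<in> S \<Longrightarrow> in_S1 S z \<Longrightarrow> mul3 f l z r \<in> S"
  by (cases z) (auto simp: sg_def in_S1_def)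

lemma lr_in:
  assumes "sg S f" "x \<in> S" "y \<in> S" "\<forall>i\<in>{1..n}. in_S1 S (w i)"
  shows "fst (lam_rho f x y w n) \<in> S \<and> snd (lam_rho f x y w n) \<in> S"
  using assms(4)
proof (induction n)
  case 0 then show ?case using assms by simp
next
  case (Suc n)
  then have "in_S1 S (w (Suc n))" by auto
  with Suc show ?case using assms(1) by (auto simp: split_beta intro!: mul3_in)
qed

lemma lr_hom:
  assumes cl: "\<forall>a\<in>A. \<forall>b\<in>A. f a b \<in> A"
    and hom: "\<forall>a\<in>A. \<forall>b\<in>A. h (f a b) = g (h a) (h b)"
    and "x \<in> A" "y \<in> A" "\<forall>i\<in>{1..n}. in_S1 A (c i)"
  shows "lam_rho g (h x) (h y) (\<lambda>i. map_option h (c i)) n = map_prod h h (lam_rho f x y c n)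
     \<and> fst (lam_rho f x y c n) \<in> A \<and> snd (lam_rho f x y c n) \<in> A"
  using assms(5)
proof (induction n)
  case 0 then show ?case using assms by simp
next
  case (Suc n)
  then have IH: "lam_rho g (h x) (h y) (\<lambda>i. map_option h (c i)) n = map_prod h h (lam_rho f x y c n)"
    "fst (lam_rho f x y c n) \<in> A" "snd (lam_rho f x y c n) \<in> A" by auto
  have z: "in_S1 A (c (Suc n))" using Suc.prems by auto
  obtain l r where lr: "lam_rho f x y c n = (l, r)" by (cases "lam_rho f x y c n")
  have lA: "l \<in> A" and rA: "r \<in> A" using IH lr by auto
  show ?case
  proof (cases "c (Suc n)")
    case None
    then show ?thesis using IH lr lA rA cl hom by simp
  next
    case (Some z0)
    then have "z0 \<in> A" using z by (simp add: in_S1_def)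
    then show ?thesis using IH lr lA rA cl hom Some by simp
  qed
qed

lemma nil_transfer:
  assumes cl: "\<forall>a\<in>A. \<forall>b\<in>A. f a b \<in> A"
    and hom: "\<forall>a\<in>A. \<forall>b\<in>A. h (f a b) = g (h a) (h b)"
    and inj: "inj_on h A" and sub: "h ` A \<subseteq> B"
    and nil: "malcev_nilpotent B g"
  shows "malcev_nilpotent A f"
proof -
  obtain n where n: "n > 0" and H: "\<forall>a\<in>B. \<forall>b\<in>B. \<forall>c.
      (\<forall>i\<in>{1..n}. in_S1 B (c i)) \<longrightarrow> lam g a b c n = rho g a b c n"
    using nil unfolding malcev_nilpotent_def by blast
  have "\<forall>a\<in>A. \<forall>b\<in>A. \<forall>c. (\<forall>i\<in>{1..n}. in_S1 A (c i)) \<longrightarrow> lam f a b c n = rho f a b c n"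
  proof (intro ballI allI impI)
    fix a b c assume a: "a \<in> A" and b: "b \<in> A" and c: "\<forall>i\<in>{1..n}. in_S1 A (c i)"
    have c': "\<forall>i\<in>{1..n}. in_S1 B (map_option h (c i))"
    proof
      fix i assume "i \<in> {1..n}"
      then have "set_option (c i) \<subseteq> A" using c by (simp add: in_S1_def)
      then show "in_S1 B (map_option h (c i))" using sub unfolding in_S1_def by (auto simp: option.set_map)
    qed
    have "lam g (h a) (h b) (\<lambda>i. map_option h (c i)) n = rho g (h a) (h b) (\<lambda>i. map_option h (c i)) n"
      using H a b sub c' by (meson image_subset_iff)
    moreover have L: "lam_rho g (h a) (h b) (\<lambda>i. map_option h (c i)) n = map_prod h h (lam_rho f a b c n)
     \<and> fst (lam_rho f a b c n) \<in> A \<and> snd (lam_rho f a b c n) \<in> A"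
      using lr_hom[OF cl hom a b c] .
    ultimately have "h (lam f a b c n) = h (rho f a b c n)"
      by (simp add: lam_def rho_def map_prod_def split_beta)
    then show "lam f a b c n = rho f a b c n"
      using inj L by (simp add: lam_def rho_def inj_on_def)
  qed
  then show ?thesis using n unfolding malcev_nilpotent_def by blast
qed

lemma gen_sub: assumes "X \<subseteq> A" "\<forall>a\<in>A. \<forall>b\<in>A. f a b \<in> A" shows "gen f X \<subseteq> A"
proof
  fix x assume "x \<in> gen f X"
  then show "x \<in> A" by induction (use assms in auto)
qed

lemma gen_cl: "\<forall>a\<in>gen f X. \<forall>b\<in>gen f X. f a b \<in> gen f X"
  by (auto intro: gen.mult)

lemma mul3_I:
  assumes "sg S f" "sg_ideal S f I" "p \<in> S" "q \<in> S" "in_S1 S z" "p \<in> I \<or> q \<in> I"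
  shows "mul3 f p z q \<in> I"
  using assms by (cases z) (auto simp: sg_def sg_ideal_def in_S1_def)

lemma pn_use:
  assumes "pseudo_nilpotent S f" "x \<in> S" "y \<in> S" "\<forall>i\<in>{1..m}. in_S1 S (w i)"
    "sg_ideal (gen f ({x, y} \<union> (\<Union>i\<in>{1..m}. set_option (w i)))) f J"
    "t < m" "lam f x y w t \<noteq> rho f x y w t"
    "(lam f x y w t, rho f x y w t) = (lam f x y w m, rho f x y w m)"
    "lam f x y w m \<notin> J" "rho f x y w m \<notin> J" "i \<le> m"
  shows "nn_edge (rees_mult f J) (rees_img J (lam f x y w i)) (rees_img J (rho f x y w i))"
  using assms unfolding pseudo_nilpotent_def Let_def by blast

lemma sg_gen: "sg S f \<Longrightarrow> X \<subseteq> S \<Longrightarrow> sg (gen f X) f"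
proof -
  assume s: "sg S f" and X: "X \<subseteq> S"
  have "gen f X \<subseteq> S" using gen_sub[OF X] s by (auto simp: sg_def)
  then show ?thesis using s gen_cl[of f X] unfolding sg_def by blast
qed

theorem lemma2p3:
  fixes S :: "'a set" and f :: "'a \<Rightarrow> 'a \<Rightarrow> 'a" and I :: "'a set"
  assumes "sg S f" and "finite S" and "pseudo_nilpotent S f"
    and "sg_ideal S f I"
    and "malcev_nilpotent I f"
    and "malcev_nilpotent (rees_carrier S I) (rees_mult f I)"
  shows "malcev_nilpotent S f"
proof (rule ccontr)
  assume nn: "\<not> malcev_nilpotent S f"
  note sgS = assms(1) and idl = assms(4)
  define N where "N = card S"
  define n where "n = N*N+1"
  have "n > 0" by (simp add: n_def)
  then obtain a b c where aS: "a \<in> S" and bS: "b \<in> S" and cS: "\<forall>i\<in>{1..n}. in_S1 S (c i)"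
    and ne: "lam f a b c n \<noteq> rho f a b c n"
    using nn unfolding malcev_nilpotent_def by blast
  define g where "g = lam_rho f a b c"
  have gS: "fst (g k) \<in> S \<and> snd (g k) \<in> S" if "k \<le> n" for k
    unfolding g_def using lr_in[OF sgS aS bS, of k c] cS that by auto
  have ninj: "\<not> inj_on g {0..n}"
  proof
    assume inj: "inj_on g {0..n}"
    have "g ` {0..n} \<subseteq> S \<times> S" proof
      fix z assume "z \<in> g ` {0..n}"
      then obtain k where "k \<le> n" "z = g k" by auto
      then show "z \<in> S \<times> S" using gS[of k] by (simp add: mem_Times_iff)
    qed
    then have "card {0..n} \<le> card (S \<times> S)"
      using card_inj_on_le[OF inj] assms(2) by blast
    then show False by (simp add: card_cartesian_product n_def N_def)
  qed
  obtain t m where tm: "t < m" "m \<le> n" "g t = g m"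
  proof -
    obtain k1 k2 where k: "k1 \<le> n" "k2 \<le> n" "k1 \<noteq> k2" "g k1 = g k2"
      using ninj unfolding inj_on_def by auto
    show ?thesis
    proof (cases "k1 < k2")
      case True then show ?thesis using k that by blast
    next
      case False then show ?thesis using k that[of k2 k1] by auto
    qed
  qed
  have nprop: "fst (g k) \<noteq> snd (g k)" if "k \<le> n" for k
  proof
    assume eq: "fst (g k) = snd (g k)"
    have "g n = g (k + (n-k))" using that by simp
    also have "\<dots> = lam_rho f (fst (g k)) (snd (g k)) (\<lambda>i. c (k+i)) (n-k)"
      unfolding g_def by (rule lr_shift)
    finally have "fst (g n) = snd (g n)" using eq lr_eq by metis
    then show False using ne by (simp add: lam_def rho_def g_def)
  qed
  have cm: "\<forall>i\<in>{1..m}. in_S1 S (c i)" using cS tm by auto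
  show False
  proof (cases "lam f a b c m \<notin> I \<and> rho f a b c m \<notin> I")
    case True
    define T where "T = gen f ({a, b} \<union> (\<Union>i\<in>{1..m}. set_option (c i)))"
    have XS: "{a, b} \<union> (\<Union>i\<in>{1..m}. set_option (c i)) \<subseteq> S"
      using aS bS cm by (auto simp: in_S1_def)
    have TS: "T \<subseteq> S" unfolding T_def using gen_sub[OF XS] sgS by (auto simp: sg_def)
    have sgT: "sg T f" unfolding T_def using sg_gen[OF sgS XS] .
    define J where "J = I \<inter> T"
    have idJ: "sg_ideal T f J"
      using idl TS gen_cl[of f] unfolding sg_ideal_def J_def T_def by blast
    define u where "u = lam f a b c m"
    define v where "v = rho f a b c m"
    have edge: "nn_edge (rees_mult f J) (rees_img J u) (rees_img J v)"
      unfolding u_def v_def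
    proof (rule pn_use[OF assms(3) aS bS cm idJ[unfolded T_def] tm(1)])
      show "lam f a b c t \<noteq> rho f a b c t" using nprop[of t] tm by (simp add: lam_def rho_def g_def)
      show "(lam f a b c t, rho f a b c t) = (lam f a b c m, rho f a b c m)"
        using tm(3) by (simp add: lam_def rho_def g_def)
      show "lam f a b c m \<notin> J" "rho f a b c m \<notin> J" using True by (auto simp: J_def)
    qed simp
    have cmT: "\<forall>i\<in>{1..m}. in_S1 T (c i)"
      unfolding T_def in_S1_def by (auto intro: gen.base)
    have abT: "a \<in> T" "b \<in> T" unfolding T_def by (auto intro: gen.base)
    have uT: "u \<in> T" and vT: "v \<in> T"
      using lr_in[OF sgT abT cmT] by (auto simp: u_def v_def lam_def rho_def)
    define G where "G = gen (rees_mult f J) {rees_img J u, rees_img J v}"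
    have inv: "p \<in> rees_carrier S I \<and> (\<forall>z. p = Some z \<longrightarrow> z \<in> T)" if "p \<in> G" for p
      using that unfolding G_def
    proof induction
      case (base x)
      then obtain w where w: "w \<in> T" "x = rees_img J w" using uT vT by auto
      show ?case
      proof (cases "w \<in> I")
        case True then show ?thesis using w by (auto simp: rees_img_def J_def rees_carrier_def)
      next
        case False then show ?thesis using w TS by (auto simp: rees_img_def J_def rees_carrier_def)
      qed
    next
      case (mult p q)
      show ?case
      proof (cases "\<exists>p1 q1. p = Some p1 \<and> q = Some q1")
        case True
        then obtain p1 q1 where pq: "p = Some p1" "q = Some q1" by blast
        then have "p1 \<in> T" "q1 \<in> T" using mult by auto
        then have fT: "f p1 q1 \<in> T" using gen_cl[of f] unfolding T_def by blast
        show ?thesis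
        proof (cases "f p1 q1 \<in> I")
          case True then show ?thesis using pq fT by (auto simp: J_def rees_carrier_def)
        next
          case False then show ?thesis using pq fT TS by (auto simp: J_def rees_carrier_def)
        qed
      next
        case False
        then have "p = None \<or> q = None" by (cases p; cases q; auto)
        then have "None \<in> rees_carrier S I" using mult by auto
        moreover have "rees_mult f J p q = None" using False by (cases p; cases q; auto)
        ultimately show ?thesis by simp
      qed
    qed
    have hom: "\<forall>p\<in>G. \<forall>q\<in>G. id (rees_mult f J p q) = rees_mult f I (id p) (id q)"
    proof (intro ballI)
      fix p q assume p: "p \<in> G" and q: "q \<in> G"
      show "id (rees_mult f J p q) = rees_mult f I (id p) (id q)"
      proof (cases "\<exists>p1 q1. p = Some p1 \<and> q = Some q1")
        case True
        then obtain p1 q1 where pq: "p = Some p1" "q = Some q1" by blast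
        then have "p1 \<in> T" "q1 \<in> T" using inv p q by auto
        then have fT: "f p1 q1 \<in> T" using gen_cl[of f] unfolding T_def by blast
        then show ?thesis using pq by (auto simp: J_def)
      next
        case False then show ?thesis by (cases p; cases q; auto)
      qed
    qed
    have "malcev_nilpotent G (rees_mult f J)"
      by (rule nil_transfer[OF _ hom _ _ assms(6)]) (use inv in \<open>auto simp: G_def intro: gen.mult\<close>)
    then show False using edge unfolding nn_edge_def G_def by simp
  next
    case False
    obtain p0 q0 where pq0: "g m = (p0, q0)" by (cases "g m")
    have gt: "g t = (p0, q0)" using tm pq0 by simp
    have p0S: "p0 \<in> S" and q0S: "q0 \<in> S" using gS[of m] tm pq0 by auto
    have zS: "in_S1 S (c (Suc t))" using cS tm by auto
    define a' where "a' = mul3 f p0 (c (Suc t)) q0"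
    define b' where "b' = mul3 f q0 (c (Suc t)) p0"
    have gSt: "g (Suc t) = (a', b')" using gt by (simp add: g_def a'_def b'_def)
    have pqI: "p0 \<in> I \<or> q0 \<in> I" using False pq0 by (auto simp: lam_def rho_def g_def)
    have a'I: "a' \<in> I" unfolding a'_def using mul3_I[OF sgS idl p0S q0S zS] pqI by blast
    have b'I: "b' \<in> I" unfolding b'_def using mul3_I[OF sgS idl q0S p0S zS] pqI by blast
    have IS: "I \<subseteq> S" using idl by (simp add: sg_ideal_def)
    have a'S: "a' \<in> S" and b'S: "b' \<in> S" using a'I b'I IS by auto
    have neab: "a' \<noteq> b'" using nprop[of "Suc t"] tm gSt by auto
    define P where "P = m - t"
    define w2 where "w2 = (\<lambda>i. if i < P then c (Suc t + i) else c (Suc t))"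
    have w2S: "\<forall>i\<in>{1..P}. in_S1 S (w2 i)"
      using cS tm zS by (auto simp: w2_def P_def)
    have c1: "lam_rho f a' b' w2 (P-1) = (p0, q0)"
    proof -
      have "g (Suc t + (P-1)) = lam_rho f a' b' (\<lambda>i. c (Suc t + i)) (P-1)"
        using lr_shift[of f a b c "Suc t" "P-1"] gSt by (simp add: g_def)
      also have "\<dots> = lam_rho f a' b' w2 (P-1)"
        by (rule lr_cong) (auto simp: w2_def)
      finally show ?thesis using pq0 tm by (simp add: P_def)
    qed
    have PS: "P = Suc (P-1)" using tm by (simp add: P_def)
    have c2: "lam_rho f a' b' w2 P = (a', b')"
    proof -
      have "w2 (Suc (P-1)) = c (Suc t)" unfolding w2_def using PS by (metis less_irrefl)
      then have "lam_rho f a' b' w2 (Suc (P-1)) = (a', b')"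
        using c1 by (simp add: a'_def b'_def)
      then show ?thesis using PS by metis
    qed
    have edge: "nn_edge (rees_mult f {}) (rees_img {} (lam f a' b' w2 0)) (rees_img {} (rho f a' b' w2 0))"
    proof (rule pn_use[OF assms(3) a'S b'S w2S])
      show "sg_ideal (gen f ({a', b'} \<union> (\<Union>i\<in>{1..P}. set_option (w2 i)))) f {}"
        by (simp add: sg_ideal_def)
      show "0 < P" using tm by (simp add: P_def)
      show "lam f a' b' w2 0 \<noteq> rho f a' b' w2 0" using neab by (simp add: lam_def rho_def)
      show "(lam f a' b' w2 0, rho f a' b' w2 0) = (lam f a' b' w2 P, rho f a' b' w2 P)"
        using c2 by (simp add: lam_def rho_def)
    qed auto
    define G where "G = gen (rees_mult f {}) {Some a', Some b'}"
    have genI: "gen f {a', b'} \<subseteq> I"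
      using gen_sub[of "{a',b'}" I f] a'I b'I idl by (auto simp: sg_ideal_def)
    have inv: "\<exists>z\<in>gen f {a', b'}. p = Some z" if "p \<in> G" for p
      using that unfolding G_def
    proof induction
      case (base x) then show ?case by (auto intro: gen.base)
    next
      case (mult p q) then show ?case by (auto intro: gen.mult)
    qed
    have "malcev_nilpotent G (rees_mult f {})"
    proof (rule nil_transfer[where h=the, OF _ _ _ _ assms(5)])
      show "\<forall>a\<in>G. \<forall>b\<in>G. rees_mult f {} a b \<in> G" unfolding G_def by (auto intro: gen.mult)
      show "\<forall>a\<in>G. \<forall>b\<in>G. the (rees_mult f {} a b) = f (the a) (the b)"
      proof (intro ballI)
        fix p q assume "p \<in> G" "q \<in> G"
        then obtain p1 q1 where "p = Some p1" "q = Some q1" using inv by blast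
        then show "the (rees_mult f {} p q) = f (the p) (the q)" by simp
      qed
      show "inj_on the G" unfolding inj_on_def
      proof (intro ballI impI)
        fix p q assume "p \<in> G" "q \<in> G" "the p = the q"
        then show "p = q" using inv by (metis option.sel)
      qed
      show "the ` G \<subseteq> I"
      proof
        fix z assume "z \<in> the ` G"
        then obtain p where "p \<in> G" "z = the p" by blast
        then show "z \<in> I" using inv[of p] genI by auto
      qed
    qed
    then show False using edge unfolding nn_edge_def G_def
      by (simp add: lam_def rho_def rees_img_def)
  qed
qed

end
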